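(* Let $\Theta$ be the class of all connected graphs $G$ with $\mathrm{ldim}_f(G)=\frac{|V(G)|}{2}$. If $G_1,G_2\in\Theta$, then the join $G_1+G_2$ belongs to $\Theta$.
   Context: All graphs are finite, simple and connected; $d(x,y)$ is the shortest-path distance. For an edge $uv$, $L(uv)=\{x\in V(G): d(u,x)\neq d(v,x)\}$. A function $f:V(G)\to[0,1]$ is a local resolving function of $G$ if $\sum_{x\in L(uv)}f(x)\geq 1$ for every edge $uv$; $\mathrm{ldim}_f(G)$ is the minimum of $\sum_{v\in V(G)}f(v)$ over all local resolving functions. The join $G_1+G_2$ is the disjoint union of $G_1$ and $G_2$ together with all edges joining a vertex of $G_1$ to a vertex of $G_2$. *)

theory Defs
  imports Complex_Main
begin

definition simple_graph :: "'a set \<Rightarrow> 'a set set \<Rightarrow> bool" where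
  "simple_graph V E \<longleftrightarrow> finite V \<and> V \<noteq> {} \<and>
     (\<forall>e\<in>E. \<exists>u v. u \<noteq> v \<and> u \<in> V \<and> v \<in> V \<and> e = {u, v})"

definition is_walk :: "'a set \<Rightarrow> 'a set set \<Rightarrow> 'a list \<Rightarrow> bool" where
  "is_walk V E xs \<longleftrightarrow> xs \<noteq> [] \<and> set xs \<subseteq> V \<and>
     (\<forall>i. Suc i < length xs \<longrightarrow> {xs ! i, xs ! Suc i} \<in> E)"

definition connected_graph :: "'a set \<Rightarrow> 'a set set \<Rightarrow> bool" where
  "connected_graph V E \<longleftrightarrow> simple_graph V E \<and>
     (\<forall>u\<in>V. \<forall>v\<in>V. \<exists>xs. is_walk V E xs \<and> hd xs = u \<and> last xs = v)"

definition gdist :: "'a set \<Rightarrow> 'a set set \<Rightarrow> 'a \<Rightarrow> 'a \<Rightarrow> nat" where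
  "gdist V E u v = (LEAST n. \<exists>xs. is_walk V E xs \<and> hd xs = u \<and> last xs = v \<and> length xs = Suc n)"

definition Lset :: "'a set \<Rightarrow> 'a set set \<Rightarrow> 'a \<Rightarrow> 'a \<Rightarrow> 'a set" where
  "Lset V E u v = {x \<in> V. gdist V E u x \<noteq> gdist V E v x}"

definition local_resolving_function :: "'a set \<Rightarrow> 'a set set \<Rightarrow> ('a \<Rightarrow> real) \<Rightarrow> bool" where
  "local_resolving_function V E f \<longleftrightarrow>
     (\<forall>x\<in>V. 0 \<le> f x \<and> f x \<le> 1) \<and>
     (\<forall>u v. {u, v} \<in> E \<longrightarrow> (\<Sum>x\<in>Lset V E u v. f x) \<ge> 1)"

text \<open>Fractional local metric dimension: the minimum (= infimum, attained)
  of the total weight over all local resolving functions.\<close>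
definition ldim_f :: "'a set \<Rightarrow> 'a set set \<Rightarrow> real" where
  "ldim_f V E = Inf {(\<Sum>v\<in>V. f v) | f. local_resolving_function V E f}"

definition in_Theta :: "'a set \<Rightarrow> 'a set set \<Rightarrow> bool" where
  "in_Theta V E \<longleftrightarrow> connected_graph V E \<and> ldim_f V E = real (card V) / 2"

definition join_V :: "'a set \<Rightarrow> 'b set \<Rightarrow> ('a + 'b) set" where
  "join_V V1 V2 = Inl ` V1 \<union> Inr ` V2"

definition join_E :: "'a set \<Rightarrow> 'a set set \<Rightarrow> 'b set \<Rightarrow> 'b set set \<Rightarrow> ('a + 'b) set set" where
  "join_E V1 E1 V2 E2 = (image Inl ` E1) \<union> (image Inr ` E2) \<union>
     {{Inl a, Inr b} | a b. a \<in> V1 \<and> b \<in> V2}"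

end

theory Submission
  imports Defs
begin

lemma walk2: "is_walk V E [a,b] \<longleftrightarrow> a \<in> V \<and> b \<in> V \<and> {a,b} \<in> E"
  unfolding is_walk_def by (auto simp: less_Suc_eq)

lemma walk3: "is_walk V E [a,b,c] \<longleftrightarrow> a \<in> V \<and> b \<in> V \<and> c \<in> V \<and> {a,b} \<in> E \<and> {b,c} \<in> E"
  unfolding is_walk_def by (auto simp: less_Suc_eq)

lemma walk1: "is_walk V E [a] \<longleftrightarrow> a \<in> V"
  unfolding is_walk_def by auto

lemma gdist_le:
  assumes "is_walk V E xs" "hd xs = u" "last xs = v"
  shows "gdist V E u v \<le> length xs - 1"
  unfolding gdist_def
proof (rule Least_le)
  have "xs \<noteq> []" using assms(1) unfolding is_walk_def by auto
  then show "\<exists>ys. is_walk V E ys \<and> hd ys = u \<and> last ys = v \<and> length ys = Suc (length xs - 1)"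
    using assms by (intro exI[of _ xs]) auto
qed

lemma gdist_ex:
  assumes "\<exists>xs. is_walk V E xs \<and> hd xs = u \<and> last xs = v"
  shows "\<exists>xs. is_walk V E xs \<and> hd xs = u \<and> last xs = v \<and> length xs = Suc (gdist V E u v)"
proof -
  obtain xs where xs: "is_walk V E xs" "hd xs = u" "last xs = v" using assms by blast
  have "xs \<noteq> []" using xs(1) unfolding is_walk_def by auto
  then have "\<exists>n. \<exists>xs. is_walk V E xs \<and> hd xs = u \<and> last xs = v \<and> length xs = Suc n"
    using xs by (intro exI[of _ "length xs - 1"] exI[of _ xs]) auto
  then show ?thesis unfolding gdist_def by (rule LeastI_ex)
qed

lemma gdist_0:
  assumes "connected_graph V E" "u \<in> V" "v \<in> V"
  shows "gdist V E u v = 0 \<longleftrightarrow> u = v"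
proof
  assume "gdist V E u v = 0"
  moreover obtain xs where "is_walk V E xs" "hd xs = u" "last xs = v" "length xs = Suc (gdist V E u v)"
    using gdist_ex[of V E u v] assms unfolding connected_graph_def by blast
  ultimately show "u = v" by (cases xs) auto
next
  assume "u = v"
  then show "gdist V E u v = 0" using gdist_le[of V E "[u]" u v] assms(2) by (simp add: walk1)
qed

lemma simple_edge:
  assumes "simple_graph V E" "{u,v} \<in> E"
  shows "u \<noteq> v" "u \<in> V" "v \<in> V"
proof -
  obtain a b where "a \<noteq> b" "a \<in> V" "b \<in> V" "{u,v} = {a,b}" using assms unfolding simple_graph_def by blast
  then show "u \<noteq> v" "u \<in> V" "v \<in> V" by (auto simp: doubleton_eq_iff)
qed

lemma gdist_1:
  assumes "connected_graph V E" "u \<in> V" "v \<in> V" "u \<noteq> v"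
  shows "gdist V E u v = 1 \<longleftrightarrow> {u,v} \<in> E"
proof
  assume "gdist V E u v = 1"
  moreover obtain xs where "is_walk V E xs" "hd xs = u" "last xs = v" "length xs = Suc (gdist V E u v)"
    using gdist_ex[of V E u v] assms unfolding connected_graph_def by blast
  ultimately show "{u,v} \<in> E"
    by (cases xs; cases "tl xs") (auto simp: walk2)
next
  assume "{u,v} \<in> E"
  then have "gdist V E u v \<le> 1" using gdist_le[of V E "[u,v]" u v] assms by (simp add: walk2)
  moreover have "gdist V E u v \<noteq> 0" using gdist_0[OF assms(1-3)] assms(4) by simp
  ultimately show "gdist V E u v = 1" by auto
qed

lemma edge_Inl: "{Inl a, Inl b} \<in> join_E V1 E1 V2 E2 \<longleftrightarrow> {a,b} \<in> E1"
proof
  assume "{Inl a, Inl b} \<in> join_E V1 E1 V2 E2"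
  then show "{a,b} \<in> E1"
    unfolding join_E_def
    apply (simp add: image_iff doubleton_eq_iff)
    apply (elim disjE bexE)
   apply (metis image_insert image_empty inj_Inl inj_image_eq_iff)
   apply (metis image_iff insertI1 sum.distinct(1))
    done
next
  assume "{a,b} \<in> E1"
  then have "Inl ` {a,b} \<in> join_E V1 E1 V2 E2" unfolding join_E_def by blast
  then show "{Inl a, Inl b} \<in> join_E V1 E1 V2 E2" by simp
qed

lemma edge_Inr: "{Inr a, Inr b} \<in> join_E V1 E1 V2 E2 \<longleftrightarrow> {a,b} \<in> E2"
proof
  assume "{Inr a, Inr b} \<in> join_E V1 E1 V2 E2"
  then show "{a,b} \<in> E2"
    unfolding join_E_def
    apply (simp add: image_iff doubleton_eq_iff)
    apply (elim disjE bexE)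
   apply (metis image_iff insertI1 sum.distinct(2))
   apply (metis image_insert image_empty inj_Inr inj_image_eq_iff)
    done
next
  assume "{a,b} \<in> E2"
  then have "Inr ` {a,b} \<in> join_E V1 E1 V2 E2" unfolding join_E_def by blast
  then show "{Inr a, Inr b} \<in> join_E V1 E1 V2 E2" by simp
qed

lemma edge_cross: "a \<in> V1 \<Longrightarrow> b \<in> V2 \<Longrightarrow> {Inl a, Inr b} \<in> join_E V1 E1 V2 E2"
  unfolding join_E_def by blast

lemma edge_cross': "a \<in> V1 \<Longrightarrow> b \<in> V2 \<Longrightarrow> {Inr b, Inl a} \<in> join_E V1 E1 V2 E2"
  using edge_cross by (metis insert_commute)

lemma join_walks:
  assumes "connected_graph V1 E1" "connected_graph V2 E2"
    and "p \<in> join_V V1 V2" "q \<in> join_V V1 V2"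
  shows "\<exists>xs. is_walk (join_V V1 V2) (join_E V1 E1 V2 E2) xs \<and> hd xs = p \<and> last xs = q \<and> length xs \<le> 3"
proof -
  obtain c1 where c1: "c1 \<in> V1" using assms(1) unfolding connected_graph_def simple_graph_def by auto
  obtain c2 where c2: "c2 \<in> V2" using assms(2) unfolding connected_graph_def simple_graph_def by auto
  have V: "Inl a \<in> join_V V1 V2 \<longleftrightarrow> a \<in> V1" "Inr b \<in> join_V V1 V2 \<longleftrightarrow> b \<in> V2" for a b
    unfolding join_V_def by auto
  show ?thesis
  proof (cases p)
    case (Inl a)
    show ?thesis
    proof (cases q)
      case (Inl b)
      then show ?thesis using Inl \<open>p = Inl a\<close> assms c2 V
        by (intro exI[of _ "[Inl a, Inr c2, Inl b]"]) (auto simp: walk3 edge_cross edge_cross')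
    next
      case (Inr b)
      then show ?thesis using Inl assms V
        by (intro exI[of _ "[Inl a, Inr b]"]) (auto simp: walk2 edge_cross)
    qed
  next
    case (Inr a)
    show ?thesis
    proof (cases q)
      case (Inl b)
      then show ?thesis using Inr assms V
        by (intro exI[of _ "[Inr a, Inl b]"]) (auto simp: walk2 edge_cross')
    next
      case (Inr b)
      then show ?thesis using Inr \<open>p = Inr a\<close> assms c1 V
        by (intro exI[of _ "[Inr a, Inl c1, Inr b]"]) (auto simp: walk3 edge_cross edge_cross')
    qed
  qed
qed

lemma join_simple:
  assumes "connected_graph V1 E1" "connected_graph V2 E2"
  shows "simple_graph (join_V V1 V2) (join_E V1 E1 V2 E2)"
proof -
  have s1: "simple_graph V1 E1" and s2: "simple_graph V2 E2"
    using assms unfolding connected_graph_def by auto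
  have A: "finite (join_V V1 V2)" "join_V V1 V2 \<noteq> {}"
    using s1 s2 unfolding simple_graph_def join_V_def by auto
  have B: "\<exists>u v. u \<noteq> v \<and> u \<in> join_V V1 V2 \<and> v \<in> join_V V1 V2 \<and> e = {u, v}"
    if ee: "e \<in> join_E V1 E1 V2 E2" for e
  proof -
    consider e' where "e' \<in> E1" "e = Inl ` e'" | e' where "e' \<in> E2" "e = Inr ` e'"
      | a b where "a \<in> V1" "b \<in> V2" "e = {Inl a, Inr b}"
      using ee unfolding join_E_def by blast
    then show ?thesis
    proof cases
      case 1
      then obtain u v where "u \<noteq> v" "u \<in> V1" "v \<in> V1" "e' = {u,v}" using s1 unfolding simple_graph_def by blast
      then show ?thesis using 1 unfolding join_V_def by (intro exI[of _ "Inl u"] exI[of _ "Inl v"]) auto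
    next
      case 2
      then obtain u v where "u \<noteq> v" "u \<in> V2" "v \<in> V2" "e' = {u,v}" using s2 unfolding simple_graph_def by blast
      then show ?thesis using 2 unfolding join_V_def by (intro exI[of _ "Inr u"] exI[of _ "Inr v"]) auto
    next
      case 3
      then show ?thesis unfolding join_V_def by (intro exI[of _ "Inl a"] exI[of _ "Inr b"]) auto
    qed
  qed
  show ?thesis unfolding simple_graph_def using A B by (intro conjI ballI) simp_all
qed

lemma join_conn:
  assumes "connected_graph V1 E1" "connected_graph V2 E2"
  shows "connected_graph (join_V V1 V2) (join_E V1 E1 V2 E2)"
  unfolding connected_graph_def
proof (intro conjI ballI)
  show "simple_graph (join_V V1 V2) (join_E V1 E1 V2 E2)" using join_simple[OF assms] .
  fix u v assume "u \<in> join_V V1 V2" "v \<in> join_V V1 V2"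
  then obtain xs where "is_walk (join_V V1 V2) (join_E V1 E1 V2 E2) xs" "hd xs = u" "last xs = v"
    using join_walks[OF assms] by metis
  then show "\<exists>xs. is_walk (join_V V1 V2) (join_E V1 E1 V2 E2) xs \<and> hd xs = u \<and> last xs = v" by blast
qed

lemma join_dist_le2:
  assumes "connected_graph V1 E1" "connected_graph V2 E2"
    and "p \<in> join_V V1 V2" "q \<in> join_V V1 V2"
  shows "gdist (join_V V1 V2) (join_E V1 E1 V2 E2) p q \<le> 2"
proof -
  obtain xs where w: "is_walk (join_V V1 V2) (join_E V1 E1 V2 E2) xs" "hd xs = p" "last xs = q" and l: "length xs \<le> 3"
    using join_walks[OF assms] by metis
  have "gdist (join_V V1 V2) (join_E V1 E1 V2 E2) p q \<le> length xs - 1" by (rule gdist_le[OF w])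
  moreover have "length xs - 1 \<le> 2" using l by simp
  ultimately show ?thesis by (rule order_trans)
qed


lemma VInl: "Inl a \<in> join_V V1 V2 \<longleftrightarrow> a \<in> V1" and VInr: "Inr b \<in> join_V V1 V2 \<longleftrightarrow> b \<in> V2"
  unfolding join_V_def by auto

lemma dj_Inl:
  assumes c1: "connected_graph V1 E1" and c2: "connected_graph V2 E2" and ab: "a \<in> V1" "b \<in> V1"
  shows "gdist (join_V V1 V2) (join_E V1 E1 V2 E2) (Inl a) (Inl b) = min (gdist V1 E1 a b) 2"
proof -
  have cj: "connected_graph (join_V V1 V2) (join_E V1 E1 V2 E2)" using join_conn[OF c1 c2] .
  have jv: "Inl a \<in> join_V V1 V2" "Inl b \<in> join_V V1 V2" using ab by (auto simp: VInl)
  show ?thesis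
  proof (cases "a = b")
    case True
    then show ?thesis using gdist_0[OF c1 ab] gdist_0[OF cj jv] by simp
  next
    case False
    then have ne: "Inl a \<noteq> (Inl b :: 'a + 'b)" by simp
    show ?thesis
    proof (cases "{a,b} \<in> E1")
      case True
      then show ?thesis using gdist_1[OF c1 ab False] gdist_1[OF cj jv ne] edge_Inl[of a b V1 E1 V2 E2] by simp
    next
      case ne2: False
      have "gdist V1 E1 a b \<noteq> 0" "gdist V1 E1 a b \<noteq> 1"
        using gdist_0[OF c1 ab] gdist_1[OF c1 ab False] False ne2 by auto
      moreover have "gdist (join_V V1 V2) (join_E V1 E1 V2 E2) (Inl a) (Inl b) \<noteq> 0"
        "gdist (join_V V1 V2) (join_E V1 E1 V2 E2) (Inl a) (Inl b) \<noteq> 1"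
        using gdist_0[OF cj jv] gdist_1[OF cj jv ne] ne edge_Inl[of a b V1 E1 V2 E2] ne2 by auto
      moreover have "gdist (join_V V1 V2) (join_E V1 E1 V2 E2) (Inl a) (Inl b) \<le> 2"
        using join_dist_le2[OF c1 c2 jv] .
      ultimately show ?thesis by linarith
    qed
  qed
qed

lemma dj_Inr:
  assumes c1: "connected_graph V1 E1" and c2: "connected_graph V2 E2" and ab: "a \<in> V2" "b \<in> V2"
  shows "gdist (join_V V1 V2) (join_E V1 E1 V2 E2) (Inr a) (Inr b) = min (gdist V2 E2 a b) 2"
proof -
  have cj: "connected_graph (join_V V1 V2) (join_E V1 E1 V2 E2)" using join_conn[OF c1 c2] .
  have jv: "Inr a \<in> join_V V1 V2" "Inr b \<in> join_V V1 V2" using ab by (auto simp: VInr)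
  show ?thesis
  proof (cases "a = b")
    case True
    then show ?thesis using gdist_0[OF c2 ab] gdist_0[OF cj jv] by simp
  next
    case False
    then have ne: "Inr a \<noteq> (Inr b :: 'a + 'b)" by simp
    show ?thesis
    proof (cases "{a,b} \<in> E2")
      case True
      then show ?thesis using gdist_1[OF c2 ab False] gdist_1[OF cj jv ne] edge_Inr[of a b V1 E1 V2 E2] by simp
    next
      case ne2: False
      have "gdist V2 E2 a b \<noteq> 0" "gdist V2 E2 a b \<noteq> 1"
        using gdist_0[OF c2 ab] gdist_1[OF c2 ab False] False ne2 by auto
      moreover have "gdist (join_V V1 V2) (join_E V1 E1 V2 E2) (Inr a) (Inr b) \<noteq> 0"
        "gdist (join_V V1 V2) (join_E V1 E1 V2 E2) (Inr a) (Inr b) \<noteq> 1"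
        using gdist_0[OF cj jv] gdist_1[OF cj jv ne] ne edge_Inr[of a b V1 E1 V2 E2] ne2 by auto
      moreover have "gdist (join_V V1 V2) (join_E V1 E1 V2 E2) (Inr a) (Inr b) \<le> 2"
        using join_dist_le2[OF c1 c2 jv] .
      ultimately show ?thesis by linarith
    qed
  qed
qed

lemma dj_cross:
  assumes c1: "connected_graph V1 E1" and c2: "connected_graph V2 E2" and ab: "a \<in> V1" "b \<in> V2"
  shows "gdist (join_V V1 V2) (join_E V1 E1 V2 E2) (Inl a) (Inr b) = 1"
    "gdist (join_V V1 V2) (join_E V1 E1 V2 E2) (Inr b) (Inl a) = 1"
proof -
  have cj: "connected_graph (join_V V1 V2) (join_E V1 E1 V2 E2)" using join_conn[OF c1 c2] .
  have jv: "Inl a \<in> join_V V1 V2" "Inr b \<in> join_V V1 V2" using ab by (auto simp: VInl VInr)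
  show "gdist (join_V V1 V2) (join_E V1 E1 V2 E2) (Inl a) (Inr b) = 1"
    using gdist_1[OF cj jv] edge_cross[OF ab] by simp
  show "gdist (join_V V1 V2) (join_E V1 E1 V2 E2) (Inr b) (Inl a) = 1"
    using gdist_1[OF cj jv(2) jv(1)] edge_cross'[OF ab] by simp
qed

lemma restrict_Inl:
  assumes c1: "connected_graph V1 E1" and c2: "connected_graph V2 E2"
    and f: "local_resolving_function (join_V V1 V2) (join_E V1 E1 V2 E2) f"
  shows "local_resolving_function V1 E1 (\<lambda>a. f (Inl a))"
  unfolding local_resolving_function_def
proof (intro conjI allI impI ballI)
  fix x assume "x \<in> V1"
  then show "0 \<le> f (Inl x)" "f (Inl x) \<le> 1" using f unfolding local_resolving_function_def by (auto simp: VInl)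
next
  fix u v assume e: "{u,v} \<in> E1"
  have s1: "simple_graph V1 E1" using c1 unfolding connected_graph_def by auto
  note uv = simple_edge[OF s1 e]
  have "{Inl u, Inl v} \<in> join_E V1 E1 V2 E2" using edge_Inl[THEN iffD2, OF e] .
  then have ge: "1 \<le> (\<Sum>x\<in>Lset (join_V V1 V2) (join_E V1 E1 V2 E2) (Inl u) (Inl v). f x)"
    using f unfolding local_resolving_function_def by blast
  have sub: "Lset (join_V V1 V2) (join_E V1 E1 V2 E2) (Inl u) (Inl v) \<subseteq> Inl ` Lset V1 E1 u v"
  proof
    fix x assume x: "x \<in> Lset (join_V V1 V2) (join_E V1 E1 V2 E2) (Inl u) (Inl v)"
    show "x \<in> Inl ` Lset V1 E1 u v"
    proof (cases x)
      case (Inl c)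
      then have c: "c \<in> V1" using x unfolding Lset_def by (auto simp: VInl)
      then show ?thesis using x Inl dj_Inl[OF c1 c2 uv(2) c] dj_Inl[OF c1 c2 uv(3) c]
        unfolding Lset_def by auto
    next
      case (Inr c)
      then have c: "c \<in> V2" using x unfolding Lset_def by (auto simp: VInr)
      then show ?thesis using x Inr dj_cross[OF c1 c2 uv(2) c] dj_cross[OF c1 c2 uv(3) c]
        unfolding Lset_def by auto
    qed
  qed
  have fin: "finite V1" using s1 unfolding simple_graph_def by auto
  have finL: "finite (Lset V1 E1 u v)" using fin unfolding Lset_def by auto
  have "(\<Sum>x\<in>Lset (join_V V1 V2) (join_E V1 E1 V2 E2) (Inl u) (Inl v). f x) \<le> (\<Sum>x\<in>Inl ` Lset V1 E1 u v. f x)"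
  proof (rule sum_mono2[OF _ sub])
    show "finite (Inl ` Lset V1 E1 u v)" using finL by simp
    fix b assume "b \<in> Inl ` Lset V1 E1 u v - Lset (join_V V1 V2) (join_E V1 E1 V2 E2) (Inl u) (Inl v)"
    then have "b \<in> join_V V1 V2" unfolding Lset_def by (auto simp: VInl)
    then show "0 \<le> f b" using f unfolding local_resolving_function_def by auto
  qed
  also have "\<dots> = (\<Sum>x\<in>Lset V1 E1 u v. f (Inl x))" by (simp add: sum.reindex)
  finally show "1 \<le> (\<Sum>x\<in>Lset V1 E1 u v. f (Inl x))" using ge by linarith
qed

lemma restrict_Inr:
  assumes c1: "connected_graph V1 E1" and c2: "connected_graph V2 E2"
    and f: "local_resolving_function (join_V V1 V2) (join_E V1 E1 V2 E2) f"
  shows "local_resolving_function V2 E2 (\<lambda>a. f (Inr a))"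
  unfolding local_resolving_function_def
proof (intro conjI allI impI ballI)
  fix x assume "x \<in> V2"
  then show "0 \<le> f (Inr x)" "f (Inr x) \<le> 1" using f unfolding local_resolving_function_def by (auto simp: VInr)
next
  fix u v assume e: "{u,v} \<in> E2"
  have s2: "simple_graph V2 E2" using c2 unfolding connected_graph_def by auto
  note uv = simple_edge[OF s2 e]
  have "{Inr u, Inr v} \<in> join_E V1 E1 V2 E2" using edge_Inr[THEN iffD2, OF e] .
  then have ge: "1 \<le> (\<Sum>x\<in>Lset (join_V V1 V2) (join_E V1 E1 V2 E2) (Inr u) (Inr v). f x)"
    using f unfolding local_resolving_function_def by blast
  have sub: "Lset (join_V V1 V2) (join_E V1 E1 V2 E2) (Inr u) (Inr v) \<subseteq> Inr ` Lset V2 E2 u v"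
  proof
    fix x assume x: "x \<in> Lset (join_V V1 V2) (join_E V1 E1 V2 E2) (Inr u) (Inr v)"
    show "x \<in> Inr ` Lset V2 E2 u v"
    proof (cases x)
      case (Inr c)
      then have c: "c \<in> V2" using x unfolding Lset_def by (auto simp: VInr)
      then show ?thesis using x Inr dj_Inr[OF c1 c2 uv(2) c] dj_Inr[OF c1 c2 uv(3) c]
        unfolding Lset_def by auto
    next
      case (Inl c)
      then have c: "c \<in> V1" using x unfolding Lset_def by (auto simp: VInl)
      then show ?thesis using x Inl dj_cross[OF c1 c2 c uv(2)] dj_cross[OF c1 c2 c uv(3)]
        unfolding Lset_def by auto
    qed
  qed
  have fin: "finite V2" using s2 unfolding simple_graph_def by auto
  have finL: "finite (Lset V2 E2 u v)" using fin unfolding Lset_def by auto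
  have "(\<Sum>x\<in>Lset (join_V V1 V2) (join_E V1 E1 V2 E2) (Inr u) (Inr v). f x) \<le> (\<Sum>x\<in>Inr ` Lset V2 E2 u v. f x)"
  proof (rule sum_mono2[OF _ sub])
    show "finite (Inr ` Lset V2 E2 u v)" using finL by simp
    fix b assume "b \<in> Inr ` Lset V2 E2 u v - Lset (join_V V1 V2) (join_E V1 E1 V2 E2) (Inr u) (Inr v)"
    then have "b \<in> join_V V1 V2" unfolding Lset_def by (auto simp: VInr)
    then show "0 \<le> f b" using f unfolding local_resolving_function_def by auto
  qed
  also have "\<dots> = (\<Sum>x\<in>Lset V2 E2 u v. f (Inr x))" by (simp add: sum.reindex)
  finally show "1 \<le> (\<Sum>x\<in>Lset V2 E2 u v. f (Inr x))" using ge by linarith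
qed

lemma ldim_le_sum:
  assumes "local_resolving_function V E f"
  shows "ldim_f V E \<le> (\<Sum>v\<in>V. f v)"
  unfolding ldim_f_def
proof (rule cInf_lower)
  show "(\<Sum>v\<in>V. f v) \<in> {(\<Sum>v\<in>V. f v) | f. local_resolving_function V E f}" using assms by blast
  show "bdd_below {(\<Sum>v\<in>V. f v) | f. local_resolving_function V E f}"
    by (rule bdd_belowI[of _ 0]) (auto simp: local_resolving_function_def intro: sum_nonneg)
qed

lemma half_lrf:
  assumes c: "connected_graph V E"
  shows "local_resolving_function V E (\<lambda>_. 1/2)"
  unfolding local_resolving_function_def
proof (intro conjI allI impI ballI)
  fix u v assume e: "{u,v} \<in> E"
  have s: "simple_graph V E" using c unfolding connected_graph_def by auto
  note uv = simple_edge[OF s e]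
  have sub: "{u,v} \<subseteq> Lset V E u v"
    using uv gdist_0[OF c uv(2) uv(2)] gdist_0[OF c uv(3) uv(3)] gdist_0[OF c uv(2) uv(3)]
      gdist_0[OF c uv(3) uv(2)] unfolding Lset_def by auto
  have fin: "finite (Lset V E u v)" using s unfolding simple_graph_def Lset_def by auto
  have "(\<Sum>x\<in>{u,v}. (1::real)/2) \<le> (\<Sum>x\<in>Lset V E u v. 1/2)"
    by (rule sum_mono2[OF fin sub]) auto
  then show "1 \<le> (\<Sum>x\<in>Lset V E u v. (1::real)/2)" using uv(1) by simp
qed auto

theorem corollary2p4:
  fixes V1 :: "'a set" and E1 :: "'a set set" and V2 :: "'b set" and E2 :: "'b set set"
  assumes "in_Theta V1 E1" and "in_Theta V2 E2"
  shows "in_Theta (join_V V1 V2) (join_E V1 E1 V2 E2)"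
proof -
  have c1: "connected_graph V1 E1" and d1: "ldim_f V1 E1 = real (card V1) / 2"
    and c2: "connected_graph V2 E2" and d2: "ldim_f V2 E2 = real (card V2) / 2"
    using assms unfolding in_Theta_def by auto
  have cj: "connected_graph (join_V V1 V2) (join_E V1 E1 V2 E2)" using join_conn[OF c1 c2] .
  have f1: "finite V1" using c1 unfolding connected_graph_def simple_graph_def by auto
  have f2: "finite V2" using c2 unfolding connected_graph_def simple_graph_def by auto
  have split: "(\<Sum>v\<in>join_V V1 V2. g v) = (\<Sum>a\<in>V1. g (Inl a)) + (\<Sum>b\<in>V2. g (Inr b))" for g :: "'a + 'b \<Rightarrow> real"
    unfolding join_V_def using f1 f2
    by (subst sum.union_disjoint) (auto simp: sum.reindex)
  have card: "card (join_V V1 V2) = card V1 + card V2"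
    unfolding join_V_def using f1 f2
    by (subst card_Un_disjoint) (auto simp: card_image)
  let ?S = "{(\<Sum>v\<in>join_V V1 V2. f v) | f. local_resolving_function (join_V V1 V2) (join_E V1 E1 V2 E2) f}"
  have mem: "real (card (join_V V1 V2)) / 2 \<in> ?S"
  proof -
    have "(\<Sum>v\<in>join_V V1 V2. (1::real)/2) = real (card (join_V V1 V2)) / 2" by simp
    then show ?thesis using half_lrf[OF cj] by (intro CollectI exI[of _ "\<lambda>_. 1/2"]) simp
  qed
  have lb: "real (card (join_V V1 V2)) / 2 \<le> s" if sS: "s \<in> ?S" for s
  proof -
    obtain f where f: "local_resolving_function (join_V V1 V2) (join_E V1 E1 V2 E2) f"
      and s: "s = (\<Sum>v\<in>join_V V1 V2. f v)" using sS by blast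
    have "real (card V1) / 2 \<le> (\<Sum>a\<in>V1. f (Inl a))"
      using ldim_le_sum[OF restrict_Inl[OF c1 c2 f]] d1 by simp
    moreover have "real (card V2) / 2 \<le> (\<Sum>a\<in>V2. f (Inr a))"
      using ldim_le_sum[OF restrict_Inr[OF c1 c2 f]] d2 by simp
    ultimately show ?thesis using s split[of f] card by simp
  qed
  have "ldim_f (join_V V1 V2) (join_E V1 E1 V2 E2) = real (card (join_V V1 V2)) / 2"
    unfolding ldim_f_def
  proof (rule antisym)
    show "Inf ?S \<le> real (card (join_V V1 V2)) / 2"
      by (rule cInf_lower[OF mem]) (rule bdd_belowI[of _ "real (card (join_V V1 V2)) / 2"], rule lb)
    show "real (card (join_V V1 V2)) / 2 \<le> Inf ?S"
      by (rule cInf_greatest) (use mem lb in auto)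
  qed
  then show ?thesis using cj unfolding in_Theta_def by simp
qed

end
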